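(* Let $\phi=\tilde p/p$ be a rational inner function on $\mathbb{D}^2$ with $\deg\phi=(m,n)$ and fix $\zeta_2\in\mathbb{T}$ such that $\tilde p(\cdot,\zeta_2)$ does not vanish on $\mathbb{T}$. Let $\phi_{\zeta_2}=\phi(\cdot,\zeta_2)$. Then for each $\mathfrak p\ge1$ there are constants $0<c\le C$ depending only on $\mathfrak p$ and $m$ (not on $\zeta_2$) with $c\,\epsilon(\phi,\zeta_2)^{1-\mathfrak p}\le\|\phi_{\zeta_2}'\|^{\mathfrak p}_{H^{\mathfrak p}(\mathbb{D})}\le C\,\epsilon(\phi,\zeta_2)^{1-\mathfrak p}$.
   Context: $\phi=\tilde p/p$ where $p\in\mathbb{C}[z_1,z_2]$ has bidegree $(m,n)$, no zeros in $\mathbb{D}^2$, is atoral, and $\tilde p(z)=z_1^mz_2^n\overline{p(1/\bar z_1,1/\bar z_2)}$; for such $\zeta_2$, $\phi_{\zeta_2}$ is a Blaschke product of degree $m$. $\epsilon(\phi,\zeta_2)=\min\{1-|z_1|:\tilde p(z_1,\zeta_2)=0\}$. $\|g\|^{\mathfrak p}_{H^{\mathfrak p}(\mathbb{D})}=\sup_{0<r<1}\frac1{2\pi}\int_{\mathbb{T}}|g(r\zeta)|^{\mathfrak p}|d\zeta|$. *)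

theory Defs
  imports "HOL-Analysis.Analysis"
begin

definition bipoly :: "(nat \<Rightarrow> nat \<Rightarrow> complex) \<Rightarrow> nat \<Rightarrow> nat \<Rightarrow> complex \<Rightarrow> complex \<Rightarrow> complex" where
  "bipoly a m n z1 z2 = (\<Sum>i\<le>m. \<Sum>j\<le>n. a i j * z1 ^ i * z2 ^ j)"

definition has_bidegree :: "(nat \<Rightarrow> nat \<Rightarrow> complex) \<Rightarrow> nat \<Rightarrow> nat \<Rightarrow> bool" where
  "has_bidegree a m n \<longleftrightarrow> (\<forall>i j. (m < i \<or> n < j) \<longrightarrow> a i j = 0)
       \<and> (\<exists>j. a m j \<noteq> 0) \<and> (\<exists>i. a i n \<noteq> 0)"

text \<open>The reflection p~(z) = z1^m z2^n conj(p(1/conj z1, 1/conj z2)), written out as the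
polynomial it is (so it is also defined at z1 = 0 or z2 = 0).\<close>
definition reflect :: "(nat \<Rightarrow> nat \<Rightarrow> complex) \<Rightarrow> nat \<Rightarrow> nat \<Rightarrow> complex \<Rightarrow> complex \<Rightarrow> complex" where
  "reflect a m n z1 z2 = (\<Sum>i\<le>m. \<Sum>j\<le>n. cnj (a i j) * z1 ^ (m - i) * z2 ^ (n - j))"

text \<open>Atoral: p and its reflection have only finitely many common zeros in C^2
(equivalently, no common factor).\<close>
definition atoral :: "(nat \<Rightarrow> nat \<Rightarrow> complex) \<Rightarrow> nat \<Rightarrow> nat \<Rightarrow> bool" where
  "atoral a m n \<longleftrightarrow> finite {(z1, z2). bipoly a m n z1 z2 = 0 \<and> reflect a m n z1 z2 = 0}"

definition eps_phi :: "(nat \<Rightarrow> nat \<Rightarrow> complex) \<Rightarrow> nat \<Rightarrow> nat \<Rightarrow> complex \<Rightarrow> real" where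
  "eps_phi a m n \<zeta> = Inf ((\<lambda>z. 1 - cmod z) ` {z. reflect a m n z \<zeta> = 0})"

definition Hp_norm_pow :: "(complex \<Rightarrow> complex) \<Rightarrow> real \<Rightarrow> ereal" where
  "Hp_norm_pow g q = (SUP r\<in>{0<..<1::real}.
      ereal (1 / (2 * pi) * integral {0..2 * pi} (\<lambda>t. cmod (g (of_real r * cis t)) powr q)))"

end

theory Submission
  imports Defs "HOL-Complex_Analysis.Complex_Analysis" "HOL-Computational_Algebra.Fundamental_Theorem_Algebra"
begin


definition gfac :: "complex \<Rightarrow> complex \<Rightarrow> complex" where
  "gfac b z = (1 - cnj b * z) / (z - b)"
definition gder :: "complex \<Rightarrow> complex \<Rightarrow> complex" where
  "gder b z = (of_real (cmod b ^ 2) - 1) / (z - b) ^ 2"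
definition pois :: "complex \<Rightarrow> complex \<Rightarrow> real" where
  "pois b z = (cmod b ^ 2 - 1) / cmod (z - b) ^ 2"

lemma gfac_deriv:
  assumes "z \<noteq> b"
  shows "(gfac b has_field_derivative gder b z) (at z)"
proof -
  have "((\<lambda>z. (1 - cnj b * z) / (z - b)) has_field_derivative
     ((- cnj b) * (z - b) - (1 - cnj b * z) * 1) / (z - b)^2) (at z)"
    using assms by (auto intro!: derivative_eq_intros simp: power2_eq_square)
  moreover have "((- cnj b) * (z - b) - (1 - cnj b * z) * 1) / (z - b)^2 = gder b z"
  proof -
    have bb: "b * cnj b = (of_real (cmod b))^2"
      by (metis complex_norm_square of_real_power)
    show ?thesis unfolding gder_def by (simp add: algebra_simps bb)
  qed
  ultimately show ?thesis unfolding gfac_def by simp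
qed

lemma norm_gder: assumes "cmod b > 1" shows "cmod (gder b z) = pois b z"
proof -
  have "cmod b ^ 2 > 1" using assms by (simp add: one_less_power)
  have e: "(of_real (cmod b ^ 2) - 1 :: complex) = of_real (cmod b ^ 2 - 1)"
    by (simp only: of_real_diff of_real_1)
  have "cmod (of_real (cmod b ^ 2) - 1 :: complex) = cmod b ^ 2 - 1"
    unfolding e norm_of_real using \<open>cmod b ^ 2 > 1\<close> by simp
  thus ?thesis unfolding gder_def pois_def by (simp add: norm_divide norm_power del: of_real_power)
qed

lemma gfac_sq_ident:
  "cmod (z - b)^2 - cmod (1 - cnj b * z)^2 = (cmod b ^2 - 1) * (1 - cmod z ^2)"
  unfolding cmod_power2 by (simp add: algebra_simps power2_eq_square)

lemma gfac_le1:
  assumes "cmod b > 1" "cmod z \<le> 1"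
  shows "cmod (gfac b z) \<le> 1"
proof -
  have zb: "z \<noteq> b" using assms by auto
  have "cmod (1 - cnj b * z)^2 \<le> cmod (z - b)^2"
  proof -
    have "cmod b ^ 2 \<ge> 1" "cmod z ^ 2 \<le> 1" using assms by (simp_all add: one_le_power power_le_one)
    hence "(cmod b ^2 - 1) * (1 - cmod z ^2) \<ge> 0" by simp
    thus ?thesis using gfac_sq_ident[of z b] by linarith
  qed
  hence "cmod (1 - cnj b * z) \<le> cmod (z - b)"
    by (rule power2_le_imp_le) simp_all
  thus ?thesis using zb unfolding gfac_def by (simp add: norm_divide divide_le_eq_1)
qed

lemma gfac_T:
  assumes "cmod b > 1" "cmod z = 1"
  shows "cmod (gfac b z) = 1" "gder b z = gfac b z * cnj z * of_real (pois b z)"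
proof -
  have zb: "z \<noteq> b" using assms by auto
  have "cmod (1 - cnj b * z)^2 = cmod (z - b)^2"
    using gfac_sq_ident[of z b] assms by simp
  hence "cmod (1 - cnj b * z) = cmod (z - b)"
    by (simp add: power2_eq_iff_nonneg)
  thus "cmod (gfac b z) = 1" using zb unfolding gfac_def by (simp add: norm_divide)
  have zz: "z * cnj z = 1" using assms by (simp add: complex_mult_cnj cmod_def)
  have e1: "1 - cnj b * z = z * cnj (z - b)"
    using zz by (simp add: algebra_simps)
  have e2: "of_real (cmod (z - b) ^ 2) = (z - b) * cnj (z - b)"
    by (rule complex_norm_square)
  have nz: "cnj (z - b) \<noteq> 0" using zb by simp
  show "gder b z = gfac b z * cnj z * of_real (pois b z)"
  proof -
    define K where "K = complex_of_real (cmod b ^ 2 - 1)"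
    have "gfac b z * cnj z * of_real (pois b z) = (z * cnj z) * cnj (z - b) * K / ((z - b) * ((z - b) * cnj (z - b)))"
      unfolding gfac_def pois_def K_def of_real_divide e2[symmetric] e1 by (simp add: mult_ac)
    also have "\<dots> = K / (z - b)^2" using zz nz zb by (simp add: power2_eq_square)
    finally show ?thesis unfolding gder_def K_def by simp
  qed
qed

definition hf :: "nat \<Rightarrow> (nat \<Rightarrow> complex) \<Rightarrow> nat \<Rightarrow> complex \<Rightarrow> complex" where
  "hf k bb i z = (if i < k then gfac (bb i) z else z)"
definition hdr :: "nat \<Rightarrow> (nat \<Rightarrow> complex) \<Rightarrow> nat \<Rightarrow> complex \<Rightarrow> complex" where
  "hdr k bb i z = (if i < k then gder (bb i) z else 1)"
definition pw :: "nat \<Rightarrow> (nat \<Rightarrow> complex) \<Rightarrow> nat \<Rightarrow> complex \<Rightarrow> real" where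
  "pw k bb i z = (if i < k then pois (bb i) z else 1)"
definition Phid :: "complex \<Rightarrow> nat \<Rightarrow> nat \<Rightarrow> (nat \<Rightarrow> complex) \<Rightarrow> complex \<Rightarrow> complex" where
  "Phid lam m k bb z = lam * (\<Sum>i<m. hdr k bb i z * (\<Prod>j\<in>{..<m}-{i}. hf k bb j z))"

lemma hf_deriv:
  assumes "\<forall>i<k. z \<noteq> bb i"
  shows "(hf k bb i has_field_derivative hdr k bb i z) (at z)"
proof (cases "i < k")
  case True
  then show ?thesis using assms gfac_deriv[of z "bb i"]
    unfolding hf_def hdr_def by (simp add: fun_eq_iff)
next
  case False
  have "hf k bb i = (\<lambda>z. z)" using False by (simp add: hf_def fun_eq_iff)
  then show ?thesis using False by (simp add: hdr_def)
qed

lemma Phi_deriv: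
  assumes "\<forall>i<k. z \<noteq> bb i"
  shows "((\<lambda>z. lam * (\<Prod>i<m. hf k bb i z)) has_field_derivative Phid lam m k bb z) (at z)"
  unfolding Phid_def
  by (intro DERIV_cmult has_field_derivative_prod hf_deriv assms)

lemma pw_nonneg:
  assumes "\<forall>i<k. cmod (bb i) > 1"
  shows "pw k bb i z \<ge> 0"
proof -
  have "i < k \<Longrightarrow> cmod (bb i) ^ 2 \<ge> 1" using assms by (auto intro: one_le_power less_imp_le)
  thus ?thesis unfolding pw_def pois_def by auto
qed

lemma hf_le1:
  assumes "\<forall>i<k. cmod (bb i) > 1" "cmod z \<le> 1"
  shows "cmod (hf k bb i z) \<le> 1"
  using assms gfac_le1 unfolding hf_def by auto

lemma norm_hd:
  assumes "\<forall>i<k. cmod (bb i) > 1"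
  shows "cmod (hdr k bb i z) = pw k bb i z"
  using assms norm_gder unfolding hdr_def pw_def by auto

lemma Phid_le:
  assumes "cmod lam = 1" "\<forall>i<k. cmod (bb i) > 1" "cmod z \<le> 1"
  shows "cmod (Phid lam m k bb z) \<le> (\<Sum>i<m. pw k bb i z)"
proof -
  have "cmod (Phid lam m k bb z) \<le> (\<Sum>i<m. cmod (hdr k bb i z * (\<Prod>j\<in>{..<m}-{i}. hf k bb j z)))"
    unfolding Phid_def norm_mult[of lam] assms(1) mult_1 by (rule norm_sum)
  also have "\<dots> \<le> (\<Sum>i<m. pw k bb i z)"
  proof (rule sum_mono)
    fix i assume "i \<in> {..<m}"
    have "cmod (\<Prod>j\<in>{..<m}-{i}. hf k bb j z) \<le> 1"
      unfolding prod_norm[symmetric]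
      by (rule prod_le_1) (use hf_le1[OF assms(2,3)] in auto)
    moreover have "cmod (hdr k bb i z) = pw k bb i z" by (rule norm_hd[OF assms(2)])
    ultimately show "cmod (hdr k bb i z * (\<Prod>j\<in>{..<m}-{i}. hf k bb j z)) \<le> pw k bb i z"
      using pw_nonneg[OF assms(2)] by (simp add: norm_mult mult_left_le)
  qed
  finally show ?thesis .
qed

lemma Phid_T:
  assumes "cmod lam = 1" "\<forall>i<k. cmod (bb i) > 1" "cmod z = 1"
  shows "cmod (Phid lam m k bb z) = (\<Sum>i<m. pw k bb i z)"
proof -
  have zb: "\<forall>i<k. z \<noteq> bb i" using assms by auto
  have hT: "cmod (hf k bb i z) = 1" for i
    using assms gfac_T(1)[of "bb i" z] unfolding hf_def by auto
  hence nz: "hf k bb i z \<noteq> 0" for i by (metis norm_zero zero_neq_one)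
  have quot: "hdr k bb i z / hf k bb i z = cnj z * of_real (pw k bb i z)" for i
  proof (cases "i < k")
    case True
    then show ?thesis using gfac_T(2)[of "bb i" z] assms nz[of i]
      unfolding hdr_def hf_def pw_def by auto
  next
    case False
    have "z * cnj z = 1" using assms by (simp add: complex_mult_cnj cmod_def)
    hence "1 / z = cnj z" by (metis divide_eq_eq mult.commute mult_zero_left zero_neq_one)
    then show ?thesis using False unfolding hdr_def hf_def pw_def by simp
  qed
  have d1: "((\<lambda>u. \<Prod>i\<in>{..<m}. hf k bb i u) has_field_derivative
     ((\<Prod>i\<in>{..<m}. hf k bb i z) * (\<Sum>i\<in>{..<m}. hdr k bb i z / hf k bb i z))) (at z)"
    by (rule has_field_derivative_prod') (use nz hf_deriv[OF zb] in auto)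
  have d2: "((\<lambda>u. \<Prod>i\<in>{..<m}. hf k bb i u) has_field_derivative
     (\<Sum>i<m. hdr k bb i z * (\<Prod>j\<in>{..<m}-{i}. hf k bb j z))) (at z)"
    by (intro has_field_derivative_prod hf_deriv zb)
  have eq: "(\<Sum>i<m. hdr k bb i z * (\<Prod>j\<in>{..<m}-{i}. hf k bb j z)) =
      (\<Prod>i\<in>{..<m}. hf k bb i z) * (cnj z * of_real (\<Sum>i<m. pw k bb i z))"
    using DERIV_unique[OF d2 d1] quot by (simp add: sum_distrib_left)
  have "cmod (\<Prod>i\<in>{..<m}. hf k bb i z) = 1"
    unfolding prod_norm[symmetric] using hT by simp
  moreover have "(\<Sum>i<m. pw k bb i z) \<ge> 0" by (intro sum_nonneg pw_nonneg assms(2))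
  ultimately show ?thesis unfolding Phid_def eq using assms(1,3)
    by (simp add: norm_mult flip: of_real_sum)
qed



lemma inv_sq_integral:
  assumes b: "cmod b > 1" and r: "0 < r" "r < 1"
  shows "((\<lambda>t. 1 / cmod (of_real r * cis t - b) ^ 2) has_integral 2 * pi / (cmod b ^ 2 - r ^ 2)) {0..2*pi}"
proof -
  have b0: "b \<noteq> 0" "cnj b \<noteq> 0" using b by auto
  define h where "h u = - 1 / (cnj b * (u - b))" for u
  define w where "w = complex_of_real (r^2) / cnj b"
  have nb: "u \<noteq> b" if "cmod u \<le> r" for u using that b r by auto
  have cont: "continuous_on (cball 0 r) h" unfolding h_def
    by (intro continuous_intros) (use nb b0 in auto)
  have hol: "h holomorphic_on (ball 0 r)" unfolding h_def
    by (intro holomorphic_intros) (use nb b0 in auto)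
  have cw: "cmod w = r^2 / cmod b" unfolding w_def by (simp add: norm_divide norm_power)
  have "r^2 / cmod b < r" using r b by (simp add: divide_less_eq power2_eq_square)
  hence wr: "norm (w - 0) < r" using cw by simp
  have "((\<lambda>u. h u / (u - w)) has_contour_integral (2 * of_real pi * \<i> * h w)) (circlepath 0 r)"
    by (rule Cauchy_integral_circlepath[OF cont hol wr])
  hence "((\<lambda>t. h (0 + r * cis t) / ((0 + r * cis t) - w) * r * \<i> * cis t) has_integral (2 * of_real pi * \<i> * h w)) {0..2*pi}"
    unfolding circlepath_def by (subst (asm) has_contour_integral_part_circlepath_iff) auto
  hence "((\<lambda>t. (- \<i>) * (h (r * cis t) / (r * cis t - w) * r * \<i> * cis t)) has_integral (- \<i>) * (2 * of_real pi * \<i> * h w)) {0..2*pi}"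
    by (intro has_integral_mult_right) simp
  moreover have "(- \<i>) * (h (r * cis t) / (r * cis t - w) * r * \<i> * cis t) = of_real (1 / cmod (of_real r * cis t - b) ^ 2)" for t
  proof -
    define z where "z = complex_of_real r * cis t"
    have zz: "z * cnj z = of_real (r^2)" unfolding z_def
      by (simp add: cis_cnj power2_eq_square) (metis cis_inverse cis_neq_zero mult.assoc mult.commute right_inverse)
    have cz: "cmod z = r" unfolding z_def using r by (simp add: norm_mult)
    have zb: "z \<noteq> b" using nb cz by auto
    have zw: "z \<noteq> w" using wr cz by auto
    have zn: "z \<noteq> 0" using cz r by auto
    have e1: "cnj b * (z - w) = - z * cnj (z - b)"
      unfolding w_def using b0 zz by (simp add: field_simps)
    have e2: "complex_of_real (cmod (z - b) ^ 2) = (z - b) * cnj (z - b)"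
      by (rule complex_norm_square)
    have "(- \<i>) * (h z / (z - w) * r * \<i> * cis t) = - z / (cnj b * (z - w) * (z - b))"
      unfolding h_def z_def using zw zb b0 by (simp add: field_simps)
    also have "\<dots> = z / (z * ((z - b) * cnj (z - b)))" unfolding e1 by (simp add: mult_ac)
    also have "\<dots> = 1 / ((z - b) * cnj (z - b))" using zn by simp
    also have "\<dots> = of_real (1 / cmod (z - b) ^ 2)" unfolding of_real_divide e2 by simp
    finally show ?thesis unfolding z_def .
  qed
  moreover have "(- \<i>) * (2 * of_real pi * \<i> * h w) = of_real (2 * pi / (cmod b ^ 2 - r ^ 2))"
  proof -
    have bb: "cnj b * b = of_real (cmod b ^ 2)"
      by (metis complex_norm_square mult.commute)
    have "r ^ 2 < cmod b ^ 2" using b r by (intro power_strict_mono) auto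
    hence "cmod b ^ 2 \<noteq> r ^ 2" by simp
    hence ne: "complex_of_real (r^2) - of_real (cmod b ^ 2) \<noteq> 0" by (simp del: of_real_power)
    have "h w = - 1 / (of_real (r^2) - cnj b * b)" unfolding h_def w_def using b0
      by (simp add: right_diff_distrib)
    also have "\<dots> = of_real (1 / (cmod b ^ 2 - r^2))" unfolding bb using ne
      by (simp add: field_simps del: of_real_power)
    finally have hw: "h w = of_real (1 / (cmod b ^ 2 - r^2))" .
    have "(- \<i>) * (2 * of_real pi * \<i> * h w) = 2 * of_real pi * h w"
      by (simp add: algebra_simps)
    thus ?thesis unfolding hw by simp
  qed
  ultimately have "((\<lambda>t. complex_of_real (1 / cmod (of_real r * cis t - b) ^ 2)) has_integral
      complex_of_real (2 * pi / (cmod b ^ 2 - r ^ 2))) {0..2*pi}" by simp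
  from has_integral_linear[OF this bounded_linear_Re] show ?thesis by (simp add: o_def)
qed


lemma pois_bounds:
  assumes b: "cmod b > 1" and z: "cmod z \<le> 1"
  shows "0 < pois b z" "pois b z \<le> (cmod b + 1) / (cmod b - 1)"
proof -
  have d: "cmod (z - b) \<ge> cmod b - 1" using z norm_triangle_ineq2[of b z]
    by (simp add: norm_minus_commute)
  have b2: "cmod b ^ 2 > 1" using b by (simp add: one_less_power)
  have zb: "cmod (z - b) > 0" using d b by linarith
  show "0 < pois b z" unfolding pois_def using b2 zb by simp
  have "(cmod b - 1)^2 \<le> cmod (z - b)^2" using d b by (intro power_mono) auto
  hence "pois b z \<le> (cmod b ^ 2 - 1) / (cmod b - 1)^2" unfolding pois_def using b2 b zb
    by (intro divide_left_mono) auto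
  also have "\<dots> = ((cmod b + 1) * (cmod b - 1)) / ((cmod b - 1) * (cmod b - 1))"
    by (simp add: algebra_simps power2_eq_square)
  also have "\<dots> = (cmod b + 1) / (cmod b - 1)" using b by simp
  finally show "pois b z \<le> (cmod b + 1) / (cmod b - 1)" .
qed

lemma cont_pois_pow:
  assumes b: "cmod b > 1" and r: "0 \<le> r" "r \<le> 1"
  shows "continuous_on S (\<lambda>t. pois b (of_real r * cis t) powr q)"
proof -
  have nz: "of_real r * cis t - b \<noteq> 0" for t using b r by (auto simp: norm_mult)
  have pos: "pois b (of_real r * cis t) > 0" for t using pois_bounds(1)[OF b, of "of_real r * cis t"] r
    by (simp add: norm_mult)
  show ?thesis
    by (rule continuous_on_powr) (use pos nz in \<open>auto simp: pois_def intro!: continuous_intros\<close>)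
qed

lemma pois_upper_int:
  assumes b: "cmod b > 1" and r: "0 < r" "r < 1" and q: "q \<ge> 1"
  shows "integral {0..2*pi} (\<lambda>t. pois b (of_real r * cis t) powr q)
     \<le> 2 * pi * (2 powr (q - 1) * (1 - 1 / cmod b) powr (1 - q))"
proof -
  define K where "K = (cmod b + 1) / (cmod b - 1)"
  have K0: "K > 0" unfolding K_def using b by simp
  have int1: "((\<lambda>t. (cmod b ^ 2 - 1) * (1 / cmod (of_real r * cis t - b) ^ 2)) has_integral
      (cmod b ^ 2 - 1) * (2 * pi / (cmod b ^ 2 - r ^ 2))) {0..2*pi}"
    by (rule has_integral_mult_right[OF inv_sq_integral[OF b r]])
  have "((\<lambda>t. K powr (q - 1) * pois b (of_real r * cis t)) has_integral
      K powr (q - 1) * ((cmod b ^ 2 - 1) * (2 * pi / (cmod b ^ 2 - r ^ 2)))) {0..2*pi}"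
    by (rule has_integral_mult_right) (use int1 in \<open>simp add: pois_def\<close>)
  note int2 = this
  have pt: "pois b (of_real r * cis t) powr q \<le> K powr (q - 1) * pois b (of_real r * cis t)" for t
  proof -
    define x where "x = pois b (of_real r * cis t)"
    have cz: "cmod (of_real r * cis t) \<le> 1" using r by (simp add: norm_mult)
    have x0: "x > 0" and xK: "x \<le> K" unfolding x_def K_def using pois_bounds[OF b cz] by auto
    have "x powr (q - 1) * x = x powr (q - 1 + 1)" using x0 powr_add[of x "q - 1" 1] by simp
    hence "x powr q = x powr (q - 1) * x" by simp
    also have "\<dots> \<le> K powr (q - 1) * x" using x0 xK q by (intro mult_right_mono powr_mono2) auto
    finally show ?thesis unfolding x_def .
  qed
  have "integral {0..2*pi} (\<lambda>t. pois b (of_real r * cis t) powr q)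
      \<le> integral {0..2*pi} (\<lambda>t. K powr (q - 1) * pois b (of_real r * cis t))"
  proof (rule integral_le)
    show "(\<lambda>t. pois b (of_real r * cis t) powr q) integrable_on {0..2*pi}"
      by (rule integrable_continuous_interval, rule cont_pois_pow[OF b]) (use r in auto)
    show "(\<lambda>t. K powr (q - 1) * pois b (of_real r * cis t)) integrable_on {0..2*pi}"
      using int2 by (rule has_integral_integrable)
  qed (rule pt)
  also have "\<dots> = K powr (q - 1) * ((cmod b ^ 2 - 1) * (2 * pi / (cmod b ^ 2 - r ^ 2)))"
    using int2 by (rule integral_unique)
  also have "\<dots> \<le> K powr (q - 1) * (2 * pi)"
  proof -
    have "r^2 < 1" using power_strict_mono[of r 1 2] r by simp
    moreover have "cmod b ^ 2 > 1" using b by (simp add: one_less_power)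
    ultimately have "(cmod b ^ 2 - 1) / (cmod b ^ 2 - r ^ 2) \<le> 1" by (simp add: divide_le_eq_1)
    hence "(cmod b ^ 2 - 1) * (2 * pi / (cmod b ^ 2 - r ^ 2)) \<le> 2 * pi"
      by (simp add: mult.commute[of _ "2 * pi"] divide_le_eq_1 mult_left_le del: divide_le_eq_1)
        (metis mult.commute mult_left_le pi_ge_zero times_divide_eq_left zero_le_numeral mult_nonneg_nonneg)
    thus ?thesis by (intro mult_left_mono) auto
  qed
  also have "K powr (q - 1) \<le> (2 / (1 - 1 / cmod b)) powr (q - 1)"
  proof -
    have bnz: "b \<noteq> 0" using b by auto
    have e: "2 / (1 - 1 / cmod b) = (2 * cmod b) / (cmod b - 1)" using b bnz by (simp add: field_simps)
    have "K \<le> 2 / (1 - 1 / cmod b)" unfolding K_def e using b by (intro divide_right_mono) auto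
    thus ?thesis using K0 q by (intro powr_mono2) auto
  qed
  hence "K powr (q - 1) * (2 * pi) \<le> (2 / (1 - 1 / cmod b)) powr (q - 1) * (2 * pi)"
    by (intro mult_right_mono) auto
  also have "(2 / (1 - 1 / cmod b)) powr (q - 1) = 2 powr (q - 1) * (1 - 1 / cmod b) powr (1 - q)"
  proof -
    have d0: "1 - 1 / cmod b > 0" using b by (simp add: divide_less_eq)
    have "(2 / (1 - 1 / cmod b)) powr (q - 1) = 2 powr (q - 1) / (1 - 1 / cmod b) powr (q - 1)"
      using d0 by (intro powr_divide)
    also have "(1 - 1 / cmod b) powr (1 - q) = inverse ((1 - 1 / cmod b) powr (q - 1))"
      using powr_minus[of "1 - 1 / cmod b" "q - 1"] by simp
    ultimately show ?thesis by (simp add: divide_inverse)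
  qed
  finally show ?thesis by (simp add: mult_ac)
qed

lemma cos_lb: "cos (x::real) \<ge> 1 - x^2 / 2"
proof -
  have c: "cos x = 1 - 2 * sin (x/2) ^ 2" using cos_double_sin[of "x/2"] by simp
  have "\<bar>sin (x/2)\<bar> ^ 2 \<le> \<bar>x/2\<bar> ^ 2" by (intro power_mono abs_sin_x_le_abs_x) auto
  hence "sin (x/2) ^ 2 \<le> (x/2) ^ 2" by (simp only: power2_abs)
  thus ?thesis unfolding c by (simp add: power2_eq_square)
qed

lemma cis_dist_sq: "cmod (cis t - of_real rho * cis th) ^ 2 = 1 + rho^2 - 2 * rho * cos (t - th)"
proof -
  have s1: "sin t ^ 2 + cos t ^ 2 = 1" and s2: "sin th ^ 2 + cos th ^ 2 = 1" by simp_all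
  have "(cos t - rho * cos th) ^ 2 + (sin t - rho * sin th) ^ 2 = 1 + rho^2 - 2 * rho * (cos t * cos th + sin t * sin th)"
    using s1 s2 by algebra
  thus ?thesis unfolding cmod_power2 cos_diff by simp
qed

lemma pois_lower_int:
  assumes b: "cmod b > 1" and q: "q \<ge> 1"
  shows "integral {0..2*pi} (\<lambda>t. pois b (cis t) powr q) \<ge> 2 powr (- q) * (1 - 1 / cmod b) powr (1 - q)"
proof -
  define rho where "rho = cmod b"
  define d where "d = 1 - 1 / rho"
  have rho1: "rho > 1" using b rho_def by simp
  have d0: "0 < d" "d < 1" unfolding d_def using rho1 by (auto simp: divide_less_eq)
  have drho: "d = (rho - 1) / rho" unfolding d_def using rho1 by (simp add: field_simps)
  define th where "th = (if Arg b \<ge> 0 then Arg b else Arg b + 2 * pi)"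
  have bth: "b = of_real rho * cis th"
  proof -
    have "b = rcis (cmod b) (Arg b)" by (simp add: rcis_cmod_Arg)
    also have "\<dots> = of_real rho * cis th" unfolding th_def rho_def rcis_def
      by (auto simp: cis_def complex_eq_iff)
    finally show ?thesis .
  qed
  have thb: "0 \<le> th" "th \<le> 2 * pi" unfolding th_def using Arg_bounded[of b] by auto
  have pi3: "pi > 3" by (rule pi_gt3)
  obtain a where sub: "{a..a+d} \<subseteq> {0..2*pi}" and near: "\<And>t. t \<in> {a..a+d} \<Longrightarrow> \<bar>t - th\<bar> \<le> d"
  proof (cases "th \<le> pi")
    case True
    show ?thesis
    proof (rule that[of th])
      show "{th..th+d} \<subseteq> {0..2*pi}" using True thb d0 pi3 by auto
      show "\<bar>t - th\<bar> \<le> d" if "t \<in> {th..th+d}" for t using that by auto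
    qed
  next
    case False
    show ?thesis
    proof (rule that[of "th - d"])
      show "{th - d..th - d + d} \<subseteq> {0..2*pi}" using False thb d0 pi3 by auto
      show "\<bar>t - th\<bar> \<le> d" if "t \<in> {th - d..th - d + d}" for t using that by auto
    qed
  qed
  have lowpt: "pois b (cis t) \<ge> 1 / (2 * d)" if "t \<in> {a..a+d}" for t
  proof -
    have c: "cos (t - th) \<ge> 1 - d^2 / 2"
    proof -
      have "\<bar>t - th\<bar>^2 \<le> d^2" using near[OF that] by (intro power_mono) auto
      hence "(t - th)^2 \<le> d^2" by (simp only: power2_abs)
      thus ?thesis using cos_lb[of "t - th"] by linarith
    qed
    have "cmod (cis t - b) ^ 2 = 1 + rho^2 - 2 * rho * cos (t - th)"
      unfolding bth by (rule cis_dist_sq)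
    also have "\<dots> \<le> 1 + rho^2 - 2 * rho * (1 - d^2 / 2)"
      using c rho1 by (simp add: mult_left_mono)
    also have "\<dots> = (rho - 1)^2 + (rho - 1)^2 / rho" unfolding drho using rho1
      by (simp add: field_simps power2_eq_square)
    also have "\<dots> \<le> 2 * (rho - 1)^2" using rho1 by (simp add: divide_le_eq)
    finally have le: "cmod (cis t - b) ^ 2 \<le> 2 * (rho - 1)^2" .
    have pos: "cmod (cis t - b) ^ 2 > 0" using b by (auto simp: norm_mult)
    have r2: "rho^2 - 1 > 0" using rho1 by (simp add: one_less_power)
    have "1 / (2 * d) = rho / (2 * (rho - 1))" unfolding drho using rho1 by simp
    also have "\<dots> \<le> (rho^2 - 1) / (2 * (rho - 1)^2)"
    proof -
      have "(rho^2 - 1) / (2 * (rho - 1)^2) = ((rho + 1) * (rho - 1)) / ((2 * (rho - 1)) * (rho - 1))"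
        by (simp add: power2_eq_square algebra_simps)
      also have "\<dots> = (rho + 1) / (2 * (rho - 1))" using rho1 by simp
      finally have "(rho^2 - 1) / (2 * (rho - 1)^2) = (rho + 1) / (2 * (rho - 1))" .
      thus ?thesis using rho1 by (simp add: divide_right_mono)
    qed
    also have "\<dots> \<le> (rho^2 - 1) / cmod (cis t - b) ^ 2"
      using le pos r2 rho1 by (intro divide_left_mono) auto
    finally show ?thesis unfolding pois_def rho_def .
  qed
  have cont: "continuous_on S (\<lambda>t. pois b (cis t) powr q)" for S
    using cont_pois_pow[OF b, of 1 S q] by simp
  have "integral {a..a+d} (\<lambda>t. (1 / (2 * d)) powr q) \<le> integral {a..a+d} (\<lambda>t. pois b (cis t) powr q)"
  proof (rule integral_le)
    show "(\<lambda>t. pois b (cis t) powr q) integrable_on {a..a+d}"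
      by (rule integrable_continuous_interval[OF cont])
    fix t assume "t \<in> {a..a+d}"
    thus "(1 / (2 * d)) powr q \<le> pois b (cis t) powr q"
      using lowpt d0 q by (intro powr_mono2) auto
  qed auto
  also have "\<dots> \<le> integral {0..2*pi} (\<lambda>t. pois b (cis t) powr q)"
    by (rule integral_subset_le[OF sub]) (auto intro: integrable_continuous_interval[OF cont])
  finally have I: "d * (1 / (2 * d)) powr q \<le> integral {0..2*pi} (\<lambda>t. pois b (cis t) powr q)"
    using d0 by simp
  have "d * (1 / (2 * d)) powr q = 2 powr (- q) * d powr (1 - q)"
  proof -
    have "(1 / (2 * d)) powr q = 1 powr q / (2 * d) powr q" using d0 by (intro powr_divide)
    also have "\<dots> = inverse (2 powr q * d powr q)" using d0 by (simp add: powr_mult divide_inverse)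
    also have "\<dots> = 2 powr (- q) * d powr (- q)" by (simp add: powr_minus)
    finally have "(1 / (2 * d)) powr q = 2 powr (- q) * d powr (- q)" .
    moreover have "d * d powr (- q) = d powr (1 - q)" using d0 powr_add[of d 1 "- q"] by simp
    ultimately show ?thesis by (simp add: mult_ac)
  qed
  thus ?thesis using I unfolding d_def rho_def by simp
qed



definition bcoef :: "(nat \<Rightarrow> nat \<Rightarrow> complex) \<Rightarrow> nat \<Rightarrow> complex \<Rightarrow> nat \<Rightarrow> complex" where
  "bcoef a n zeta i = (\<Sum>j\<le>n. a i j * zeta ^ j)"

lemma bipoly_bcoef: "bipoly a m n z zeta = (\<Sum>i\<le>m. bcoef a n zeta i * z ^ i)"
  unfolding bipoly_def bcoef_def by (simp add: sum_distrib_left mult_ac)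

lemma reflect_conj:
  assumes zeta: "cmod zeta = 1" and z: "z \<noteq> 0"
  shows "reflect a m n z zeta = zeta ^ n * z ^ m * cnj (bipoly a m n (1 / cnj z) zeta)"
proof -
  have zz: "zeta * cnj zeta = 1" using zeta by (simp add: complex_mult_cnj cmod_def)
  have t: "zeta ^ n * z ^ m * (cnj (a i j) * (1 / z) ^ i * cnj zeta ^ j) = cnj (a i j) * z ^ (m - i) * zeta ^ (n - j)"
    if "i \<le> m" "j \<le> n" for i j
  proof -
    have "z ^ m = z ^ (m - i) * z ^ i" using that by (simp flip: power_add)
    moreover have "zeta ^ n = zeta ^ (n - j) * zeta ^ j" using that by (simp flip: power_add)
    moreover have "z ^ i * (1 / z) ^ i = 1" using z by (simp add: power_one_over field_simps)
    moreover have "zeta ^ j * cnj zeta ^ j = 1" using zz by (simp flip: power_mult_distrib)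
    ultimately show ?thesis
      by (simp add: algebra_simps) (metis (no_types, lifting) mult.assoc mult.commute mult_1_right)
  qed
  have "zeta ^ n * z ^ m * cnj (bipoly a m n (1 / cnj z) zeta) =
     (\<Sum>i\<le>m. \<Sum>j\<le>n. zeta ^ n * z ^ m * (cnj (a i j) * (1 / z) ^ i * cnj zeta ^ j))"
    unfolding bipoly_def by (simp add: sum_distrib_left)
  also have "\<dots> = reflect a m n z zeta" unfolding reflect_def
    by (intro sum.cong refl) (simp add: t)
  finally show ?thesis by simp
qed

definition Ppol :: "(nat \<Rightarrow> nat \<Rightarrow> complex) \<Rightarrow> nat \<Rightarrow> nat \<Rightarrow> complex \<Rightarrow> complex poly" where
  "Ppol a m n zeta = (\<Sum>i\<le>m. monom (bcoef a n zeta i) i)"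

lemma poly_Ppol: "poly (Ppol a m n zeta) z = bipoly a m n z zeta"
  unfolding Ppol_def bipoly_bcoef by (simp add: poly_sum poly_monom)

lemma coeff_Ppol: "coeff (Ppol a m n zeta) j = (if j \<le> m then bcoef a n zeta j else 0)"
  unfolding Ppol_def by (simp add: coeff_sum)

lemma degree_Ppol: "degree (Ppol a m n zeta) \<le> m"
  by (rule degree_le) (simp add: coeff_Ppol)

lemma P_inside_nz:
  assumes nz: "\<forall>z1 z2. cmod z1 < 1 \<longrightarrow> cmod z2 < 1 \<longrightarrow> bipoly a m n z1 z2 \<noteq> 0"
    and zeta: "cmod zeta = 1"
    and PT: "\<And>w. cmod w = 1 \<Longrightarrow> bipoly a m n w zeta \<noteq> 0"
    and w0: "cmod w0 < 1"
  shows "bipoly a m n w0 zeta \<noteq> 0"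
proof
  assume P0: "bipoly a m n w0 zeta = 0"
  define g where "g z = bipoly a m n z zeta" for z
  define s :: "nat \<Rightarrow> real" where "s N = 1 + - inverse (real (Suc N))" for N
  define F where "F N z = bipoly a m n z (of_real (s N) * zeta)" for N z
  have s01: "0 \<le> s N" "s N < 1" for N unfolding s_def by (auto simp: inverse_le_1_iff)
  have slim: "s \<longlonglongrightarrow> 1" unfolding s_def by (rule LIMSEQ_inverse_real_of_nat_add_minus)
  show False
  proof (cases "g constant_on ball 0 1")
    case True
    then obtain c where c: "\<And>z. z \<in> ball 0 1 \<Longrightarrow> g z = c" unfolding constant_on_def by blast
    have "g w0 = c" using c w0 by simp
    hence c0: "c = 0" using P0 g_def by simp
    have Pnz: "Ppol a m n zeta \<noteq> 0"
    proof
      assume "Ppol a m n zeta = 0"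
      hence "bipoly a m n 1 zeta = 0" using poly_Ppol[of a m n zeta 1] by simp
      thus False using PT[of 1] by simp
    qed
    have "ball 0 1 \<subseteq> {z. poly (Ppol a m n zeta) z = 0}"
      using c c0 by (auto simp: poly_Ppol g_def)
    moreover have "finite {z. poly (Ppol a m n zeta) z = 0}" by (rule poly_roots_finite[OF Pnz])
    moreover have "infinite (ball (0::complex) 1)"
    proof -
      have "\<forall>\<epsilon>>0. infinite (UNIV \<inter> ball (0::complex) \<epsilon>)"
        using islimpt_eq_infinite_ball[of 0 UNIV] islimpt_UNIV[of "0::complex"] by blast
      thus ?thesis by (metis inf_top_left zero_less_one)
    qed
    ultimately show False using finite_subset by blast
  next
    case False
    have "g w0 \<noteq> 0"
    proof (rule Hurwitz_no_zeros[of "ball 0 1" F g])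
      show "open (ball (0::complex) 1)" "connected (ball (0::complex) 1)" by auto
      show "F N holomorphic_on ball 0 1" for N unfolding F_def bipoly_def
        by (intro holomorphic_intros)
      show "g holomorphic_on ball 0 1" unfolding g_def bipoly_def
        by (intro holomorphic_intros)
      show "\<not> g constant_on ball 0 1" by (rule False)
      show "F N z \<noteq> 0" if "z \<in> ball 0 1" for N z
        unfolding F_def using nz that s01[of N] zeta by (auto simp: norm_mult)
      show "w0 \<in> ball 0 1" using w0 by simp
      fix K :: "complex set" assume K: "compact K" "K \<subseteq> ball 0 1"
      define D where "D N = (\<Sum>i\<le>m. \<Sum>j\<le>n. cmod (a i j) * cmod ((of_real (s N) * zeta) ^ j - zeta ^ j))" for N
      have "D \<longlonglongrightarrow> (\<Sum>i\<le>m. \<Sum>j\<le>n. cmod (a i j) * cmod ((of_real 1 * zeta) ^ j - zeta ^ j))"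
        unfolding D_def by (intro tendsto_intros slim)
      hence Dlim: "D \<longlonglongrightarrow> 0" by simp
      show "uniform_limit K F g sequentially"
      proof (rule uniform_limitI)
        fix e :: real assume e: "e > 0"
        have ev: "\<forall>\<^sub>F N in sequentially. D N < e"
          using Dlim e by (simp add: order_tendsto_iff)
        show "\<forall>\<^sub>F N in sequentially. \<forall>x\<in>K. dist (F N x) (g x) < e"
        proof (rule eventually_mono[OF ev], intro ballI)
          fix N x assume DN: "D N < e" and x: "x \<in> K"
          have x1: "cmod x \<le> 1" using x K by auto
          have "dist (F N x) (g x) = cmod (\<Sum>i\<le>m. \<Sum>j\<le>n. a i j * x ^ i * ((of_real (s N) * zeta) ^ j - zeta ^ j))"
            unfolding F_def g_def bipoly_def dist_norm
            by (simp add: sum_subtractf[symmetric] algebra_simps)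
          also have "\<dots> \<le> (\<Sum>i\<le>m. \<Sum>j\<le>n. cmod (a i j * x ^ i * ((of_real (s N) * zeta) ^ j - zeta ^ j)))"
            by (rule order_trans[OF norm_sum sum_mono[OF norm_sum]])
          also have "\<dots> \<le> D N" unfolding D_def
          proof (intro sum_mono)
            fix i j
            have "cmod x ^ i \<le> 1" using x1 by (simp add: power_le_one)
            thus "cmod (a i j * x ^ i * ((of_real (s N) * zeta) ^ j - zeta ^ j)) \<le>
                  cmod (a i j) * cmod ((of_real (s N) * zeta) ^ j - zeta ^ j)"
              by (simp add: norm_mult norm_power mult.assoc mult_left_le_one_le mult_left_mono)
          qed
          finally show "dist (F N x) (g x) < e" using DN by simp
        qed
      qed
    qed
    thus False using P0 g_def by simp
  qed
qed

lemma prod_hf: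
  assumes "k \<le> m"
  shows "(\<Prod>i<m. hf k bb i w) = (\<Prod>i<k. gfac (bb i) w) * w ^ (m - k)"
proof -
  have "(\<Prod>i<m. hf k bb i w) = (\<Prod>i\<in>{..<m} \<inter> {i. i < k}. gfac (bb i) w) * (\<Prod>i\<in>{..<m} \<inter> - {i. i < k}. w)"
    unfolding hf_def by (rule prod.If_cases) simp
  also have "{..<m} \<inter> {i. i < k} = {..<k}" using assms by auto
  also have "{..<m} \<inter> - {i. i < k} = {k..<m}" by auto
  finally show ?thesis by simp
qed

lemma key:
  assumes m1: "m \<ge> 1"
    and nz: "\<forall>z1 z2. cmod z1 < 1 \<longrightarrow> cmod z2 < 1 \<longrightarrow> bipoly a m n z1 z2 \<noteq> 0"
    and zeta: "cmod zeta = 1"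
    and RT: "\<forall>z. cmod z = 1 \<longrightarrow> reflect a m n z zeta \<noteq> 0"
  obtains lam k bb where "cmod lam = 1" "k \<le> m" "\<forall>i<k. cmod (bb i) > 1"
    "\<And>z. cmod z \<le> 1 \<Longrightarrow> deriv (\<lambda>w. reflect a m n w zeta / bipoly a m n w zeta) z = Phid lam m k bb z"
    "eps_phi a m n zeta = Min ((\<lambda>i. if i < k then 1 - 1 / cmod (bb i) else 1) ` {..<m})"
proof -
  define P where "P w = bipoly a m n w zeta" for w
  define R where "R w = reflect a m n w zeta" for w
  define Pp where "Pp = Ppol a m n zeta"
  have zeta0: "zeta \<noteq> 0" using zeta by auto
  have PT: "P w \<noteq> 0" if "cmod w = 1" for w
  proof
    assume "P w = 0"
    have w0: "w \<noteq> 0" using that by auto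
    have "1 / cnj w = w" using that by (simp add: complex_div_cnj[symmetric] divide_conv_cnj)
    hence "R w = zeta ^ n * w ^ m * cnj (P w)" using reflect_conj[OF zeta w0] unfolding R_def P_def by simp
    thus False using \<open>P w = 0\<close> RT that unfolding R_def by simp
  qed
  have Pin: "P w \<noteq> 0" if "cmod w < 1" for w
    unfolding P_def by (rule P_inside_nz[OF nz zeta _ that]) (use PT P_def in auto)
  have Pcl: "P w \<noteq> 0" if "cmod w \<le> 1" for w using PT Pin that by force
  have polyP: "poly Pp w = P w" for w unfolding Pp_def P_def by (rule poly_Ppol)
  have Pp0: "Pp \<noteq> 0" using polyP[of 1] Pcl[of 1] by auto
  obtain bb where fac: "smult (lead_coeff Pp) (\<Prod>i<degree Pp. [:-bb i, 1:]) = Pp"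
    using complex_poly_decompose'[of Pp] by blast
  define k where "k = degree Pp"
  define c where "c = lead_coeff Pp"
  have c0: "c \<noteq> 0" unfolding c_def using Pp0 by simp
  have km: "k \<le> m" unfolding k_def Pp_def by (rule degree_Ppol)
  have Pprod: "P w = c * (\<Prod>i<k. (w - bb i))" for w
  proof -
    have "P w = poly (smult (lead_coeff Pp) (\<Prod>i<degree Pp. [:-bb i, 1:])) w" using fac polyP by simp
    thus ?thesis unfolding c_def k_def by (simp add: poly_prod)
  qed
  have bb1: "cmod (bb i) > 1" if "i < k" for i
  proof (rule ccontr)
    assume "\<not> cmod (bb i) > 1"
    hence "P (bb i) \<noteq> 0" using Pcl by simp
    moreover have "P (bb i) = 0" unfolding Pprod using that by (auto intro!: prod_zero)
    ultimately show False by simp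
  qed
  have Rprod_nz: "R z = zeta ^ n * cnj c * z ^ (m - k) * (\<Prod>i<k. (1 - cnj (bb i) * z))" if z0: "z \<noteq> 0" for z
  proof -
    have "R z = zeta ^ n * z ^ m * cnj (P (1 / cnj z))" using reflect_conj[OF zeta z0] unfolding R_def P_def .
    also have "cnj (P (1 / cnj z)) = cnj c * (\<Prod>i<k. (1 / z - cnj (bb i)))"
      unfolding Pprod by (simp add: cnj_prod)
    also have "z ^ m = z ^ (m - k) * (\<Prod>i<k. z)" using km by (simp flip: power_add)
    finally have "R z = zeta ^ n * cnj c * z ^ (m - k) * ((\<Prod>i<k. z) * (\<Prod>i<k. (1 / z - cnj (bb i))))"
      by (simp add: mult_ac)
    also have "(\<Prod>i<k. z) * (\<Prod>i<k. (1 / z - cnj (bb i))) = (\<Prod>i<k. (1 - cnj (bb i) * z))"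
      unfolding prod.distrib[symmetric] using z0 by (intro prod.cong refl) (simp add: field_simps)
    finally show ?thesis .
  qed
  have Rprod: "R z = zeta ^ n * cnj c * z ^ (m - k) * (\<Prod>i<k. (1 - cnj (bb i) * z))" for z
  proof (cases "z = 0")
    case False thus ?thesis by (rule Rprod_nz)
  next
    case True
    define Q where "Q z = zeta ^ n * cnj c * z ^ (m - k) * (\<Prod>i<k. (1 - cnj (bb i) * z))" for z
    have c1: "isCont R 0" unfolding R_def reflect_def by (intro continuous_intros)
    have c2: "isCont Q 0" unfolding Q_def by (intro continuous_intros)
    have "(R \<longlongrightarrow> R 0) (at 0)" using c1 by (simp add: isCont_def)
    moreover have "(R \<longlongrightarrow> Q 0) (at 0)"
    proof -
      have "(Q \<longlongrightarrow> Q 0) (at 0)" using c2 by (simp add: isCont_def)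
      moreover have "\<forall>\<^sub>F x in at 0. Q x = R x"
        using Rprod_nz unfolding Q_def by (auto simp: eventually_at_filter)
      ultimately show ?thesis by (rule Lim_transform_eventually)
    qed
    ultimately have "R 0 = Q 0" using tendsto_unique[of "at (0::complex)" R] by simp
    thus ?thesis using True unfolding Q_def by simp
  qed
  define lam where "lam = zeta ^ n * cnj c / c"
  have lam1: "cmod lam = 1" unfolding lam_def using zeta c0 by (simp add: norm_mult norm_divide norm_power)
  have phieq: "R w / P w = lam * (\<Prod>i<m. hf k bb i w)" if "P w \<noteq> 0" for w
  proof -
    have pw: "(\<Prod>i<k. (w - bb i)) \<noteq> 0" using that Pprod by auto
    have "(\<Prod>i<m. hf k bb i w) = (\<Prod>i<k. (1 - cnj (bb i) * w)) / (\<Prod>i<k. (w - bb i)) * w ^ (m - k)"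
      unfolding prod_hf[OF km] gfac_def by (simp add: prod_dividef)
    thus ?thesis unfolding Rprod Pprod lam_def using pw c0 by (simp add: field_simps)
  qed
  have deq: "deriv (\<lambda>w. R w / P w) z = Phid lam m k bb z" if z: "cmod z \<le> 1" for z
  proof -
    define U where "U = - (bb ` {..<k})"
    have oU: "open U" unfolding U_def by (intro open_Compl finite_imp_closed) auto
    have zU: "z \<in> U" unfolding U_def using bb1 z by force
    have PU: "P w \<noteq> 0" if "w \<in> U" for w using that unfolding U_def Pprod using c0 by auto
    have ev: "\<forall>\<^sub>F w in nhds z. R w / P w = lam * (\<Prod>i<m. hf k bb i w)"
      using eventually_nhds_in_open[OF oU zU] by eventually_elim (use PU phieq in auto)
    have "deriv (\<lambda>w. R w / P w) z = deriv (\<lambda>w. lam * (\<Prod>i<m. hf k bb i w)) z"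
      by (rule deriv_cong_ev[OF ev refl])
    also have "\<dots> = Phid lam m k bb z"
      by (rule DERIV_imp_deriv, rule Phi_deriv) (use zU U_def in auto)
    finally show ?thesis .
  qed
  define dl where "dl i = (if i < k then 1 - 1 / cmod (bb i) else 1)" for i
  have Rzero: "R z = 0 \<longleftrightarrow> (z = 0 \<and> k < m) \<or> (\<exists>i<k. z = 1 / cnj (bb i))" for z
  proof -
    have bnz: "cnj (bb i) \<noteq> 0" if "i < k" for i using bb1[OF that] by auto
    have e: "1 - cnj (bb i) * z = 0 \<longleftrightarrow> z = 1 / cnj (bb i)" if "i < k" for i
      using bnz[OF that] by (auto simp: field_simps)
    show ?thesis unfolding Rprod using zeta0 c0 e by (auto simp: prod_zero_iff)
  qed
  have img: "(\<lambda>z. 1 - cmod z) ` {z. R z = 0} = dl ` {..<m}"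
  proof (intro equalityI subsetI)
    fix x assume "x \<in> (\<lambda>z. 1 - cmod z) ` {z. R z = 0}"
    then obtain z where x: "x = 1 - cmod z" and "R z = 0" by auto
    then consider "z = 0" "k < m" | i where "i < k" "z = 1 / cnj (bb i)" using Rzero by auto
    thus "x \<in> dl ` {..<m}"
    proof cases
      case 1 thus ?thesis using x unfolding dl_def by (auto intro!: image_eqI[of _ _ k])
    next
      case 2 thus ?thesis using x km unfolding dl_def
        by (auto intro!: image_eqI[of _ _ i] simp: norm_divide)
    qed
  next
    fix x assume "x \<in> dl ` {..<m}"
    then obtain i where i: "i < m" "x = dl i" by auto
    show "x \<in> (\<lambda>z. 1 - cmod z) ` {z. R z = 0}"
    proof (cases "i < k")
      case True
      thus ?thesis using i Rzero[of "1 / cnj (bb i)"] unfolding dl_def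
        by (auto intro!: image_eqI[of _ _ "1 / cnj (bb i)"] simp: norm_divide)
    next
      case False
      thus ?thesis using i Rzero[of 0] unfolding dl_def by (auto intro!: image_eqI[of _ _ 0])
    qed
  qed
  have epsq: "eps_phi a m n zeta = Min (dl ` {..<m})"
  proof -
    have "eps_phi a m n zeta = Inf (dl ` {..<m})" unfolding eps_phi_def img[unfolded R_def, symmetric] ..
    also have "\<dots> = Min (dl ` {..<m})" using m1 by (intro cInf_eq_Min) (auto simp: lessThan_empty_iff)
    finally show ?thesis .
  qed
  show ?thesis
  proof (rule that[OF lam1 km])
    show "\<forall>i<k. cmod (bb i) > 1" using bb1 by auto
    show "deriv (\<lambda>w. reflect a m n w zeta / bipoly a m n w zeta) z = Phid lam m k bb z" if "cmod z \<le> 1" for z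
      using deq[OF that] unfolding R_def P_def .
    show "eps_phi a m n zeta = Min ((\<lambda>i. if i < k then 1 - 1 / cmod (bb i) else 1) ` {..<m})"
      using epsq unfolding dl_def .
  qed
qed



lemma sum_powr_le:
  fixes x :: "nat \<Rightarrow> real"
  assumes fin: "finite I" and ne: "I \<noteq> {}" and x0: "\<And>i. i \<in> I \<Longrightarrow> x i \<ge> 0" and q: "q > 0"
  shows "(\<Sum>i\<in>I. x i) powr q \<le> real (card I) powr q * (\<Sum>i\<in>I. x i powr q)"
proof -
  define M where "M = Max (x ` I)"
  have MI: "M \<in> x ` I" unfolding M_def using fin ne by (intro Max_in) auto
  then obtain i0 where i0: "i0 \<in> I" "M = x i0" by auto
  have le: "x i \<le> M" if "i \<in> I" for i unfolding M_def using fin that by (intro Max_ge) auto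
  have "(\<Sum>i\<in>I. x i) \<le> (\<Sum>i\<in>I. M)" by (intro sum_mono le)
  hence s: "(\<Sum>i\<in>I. x i) \<le> real (card I) * M" by simp
  have M0: "M \<ge> 0" using i0 x0 by auto
  have "(\<Sum>i\<in>I. x i) powr q \<le> (real (card I) * M) powr q"
    using s q x0 by (intro powr_mono2) (auto intro: sum_nonneg)
  also have "\<dots> = real (card I) powr q * M powr q" using M0 by (simp add: powr_mult)
  also have "M powr q \<le> (\<Sum>i\<in>I. x i powr q)"
    unfolding i0(2) using fin i0(1) by (intro member_le_sum) auto
  hence "real (card I) powr q * M powr q \<le> real (card I) powr q * (\<Sum>i\<in>I. x i powr q)"
    by (intro mult_left_mono) auto
  finally show ?thesis .
qed

lemma cont_hf:
  assumes "\<forall>z\<in>S. \<forall>i<k. z \<noteq> bb i"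
  shows "continuous_on S (hf k bb i)" "continuous_on S (hdr k bb i)"
proof -
  show "continuous_on S (hf k bb i)"
  proof (cases "i < k")
    case True
    hence "hf k bb i = (\<lambda>z. (1 - cnj (bb i) * z) / (z - bb i))" by (simp add: fun_eq_iff hf_def gfac_def)
    thus ?thesis using assms True by (auto intro!: continuous_intros)
  next
    case False
    hence "hf k bb i = (\<lambda>z. z)" by (simp add: fun_eq_iff hf_def)
    thus ?thesis by (auto intro!: continuous_intros)
  qed
  show "continuous_on S (hdr k bb i)"
  proof (cases "i < k")
    case True
    hence "hdr k bb i = (\<lambda>z. (of_real (cmod (bb i) ^ 2) - 1) / (z - bb i) ^ 2)" by (simp add: fun_eq_iff hdr_def gder_def)
    thus ?thesis using assms True by (auto intro!: continuous_intros)
  next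
    case False
    hence "hdr k bb i = (\<lambda>z. 1)" by (simp add: fun_eq_iff hdr_def)
    thus ?thesis by (auto intro!: continuous_intros)
  qed
qed

lemma cont_Phid:
  assumes "\<forall>z\<in>S. \<forall>i<k. z \<noteq> bb i"
  shows "continuous_on S (Phid lam m k bb)"
proof -
  have "continuous_on S (\<lambda>z. lam * (\<Sum>i<m. hdr k bb i z * (\<Prod>j\<in>{..<m}-{i}. hf k bb j z)))"
    using cont_hf[OF assms] by (intro continuous_intros) auto
  thus ?thesis unfolding Phid_def[abs_def] .
qed

lemma cont_Phid_disk:
  assumes "\<forall>i<k. cmod (bb i) > 1"
  shows "continuous_on (cball 0 1) (Phid lam m k bb)"
  by (rule cont_Phid) (use assms in force)

lemma cont_pw_pow:
  assumes "\<forall>i<k. cmod (bb i) > 1" "0 \<le> r" "r \<le> 1"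
  shows "continuous_on S (\<lambda>t. pw k bb i (of_real r * cis t) powr q)"
proof (cases "i < k")
  case True
  thus ?thesis using cont_pois_pow[of "bb i" r S q] assms unfolding pw_def by simp
next
  case False
  thus ?thesis unfolding pw_def by simp
qed

lemma upper_int:
  assumes lam: "cmod lam = 1" and bb: "\<forall>i<k. cmod (bb i) > 1" and r: "0 < r" "r < 1" and q: "q \<ge> 1"
    and m1: "m \<ge> 1"
  shows "integral {0..2*pi} (\<lambda>t. cmod (Phid lam m k bb (of_real r * cis t)) powr q)
    \<le> real m powr q * (\<Sum>i<m. 2 * pi * (2 powr (q - 1) * (if i < k then 1 - 1 / cmod (bb i) else 1) powr (1 - q)))"
proof -
  have cz: "cmod (of_real r * cis t) \<le> 1" for t using r by (simp add: norm_mult)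
  have intpw: "(\<lambda>t. pw k bb i (of_real r * cis t) powr q) integrable_on {0..2*pi}" for i
    by (rule integrable_continuous_interval, rule cont_pw_pow) (use bb r in auto)
  have pt: "cmod (Phid lam m k bb (of_real r * cis t)) powr q
      \<le> real m powr q * (\<Sum>i<m. pw k bb i (of_real r * cis t) powr q)" for t
  proof -
    have "cmod (Phid lam m k bb (of_real r * cis t)) powr q \<le> (\<Sum>i<m. pw k bb i (of_real r * cis t)) powr q"
      using Phid_le[OF lam bb cz] q by (intro powr_mono2) auto
    also have "\<dots> \<le> real (card {..<m}) powr q * (\<Sum>i<m. pw k bb i (of_real r * cis t) powr q)"
      using m1 q by (intro sum_powr_le pw_nonneg bb) (auto simp: lessThan_empty_iff)
    finally show ?thesis by simp
  qed
  have "integral {0..2*pi} (\<lambda>t. cmod (Phid lam m k bb (of_real r * cis t)) powr q)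
     \<le> integral {0..2*pi} (\<lambda>t. real m powr q * (\<Sum>i<m. pw k bb i (of_real r * cis t) powr q))"
  proof (rule integral_le)
    show "(\<lambda>t. cmod (Phid lam m k bb (of_real r * cis t)) powr q) integrable_on {0..2*pi}"
    proof (rule integrable_continuous_interval, rule continuous_on_powr')
      show "continuous_on {0..2*pi} (\<lambda>t. cmod (Phid lam m k bb (of_real r * cis t)))"
        by (intro continuous_on_norm continuous_on_compose2[OF cont_Phid_disk[OF bb]] continuous_intros)
           (use cz in auto)
    qed (use q in auto)
    show "(\<lambda>t. real m powr q * (\<Sum>i<m. pw k bb i (of_real r * cis t) powr q)) integrable_on {0..2*pi}"
      using integrable_on_cmult_left[OF integrable_sum[of "{..<m}" "\<lambda>i t. pw k bb i (of_real r * cis t) powr q", OF _ intpw], of "real m powr q"] by simp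
  qed (rule pt)
  also have "\<dots> = real m powr q * (\<Sum>i<m. integral {0..2*pi} (\<lambda>t. pw k bb i (of_real r * cis t) powr q))"
    by (simp add: integral_sum intpw)
  also have "\<dots> \<le> real m powr q * (\<Sum>i<m. 2 * pi * (2 powr (q - 1) * (if i < k then 1 - 1 / cmod (bb i) else 1) powr (1 - q)))"
  proof (intro mult_left_mono sum_mono)
    fix i assume "i \<in> {..<m}"
    show "integral {0..2*pi} (\<lambda>t. pw k bb i (of_real r * cis t) powr q)
      \<le> 2 * pi * (2 powr (q - 1) * (if i < k then 1 - 1 / cmod (bb i) else 1) powr (1 - q))"
    proof (cases "i < k")
      case True
      thus ?thesis using pois_upper_int[of "bb i" r q] bb r q unfolding pw_def by simp
    next
      case False
      have "1 \<le> 2 powr (q - 1)" using q by (intro ge_one_powr_ge_zero) auto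
      thus ?thesis using False unfolding pw_def by simp
    qed
  qed simp
  finally show ?thesis .
qed

lemma lower_int1:
  assumes lam: "cmod lam = 1" and bb: "\<forall>i<k. cmod (bb i) > 1" and q: "q \<ge> 1" and i0: "i0 < m"
  shows "integral {0..2*pi} (\<lambda>t. cmod (Phid lam m k bb (cis t)) powr q)
    \<ge> 2 powr (- q) * (if i0 < k then 1 - 1 / cmod (bb i0) else 1) powr (1 - q)"
proof -
  have cz: "cmod (cis t) = 1" for t by simp
  have cpw: "continuous_on S (\<lambda>t. pw k bb i0 (cis t) powr q)" for S
    using cont_pw_pow[OF bb, where r=1 and i=i0 and S=S and q=q] by simp
  have "integral {0..2*pi} (\<lambda>t. pw k bb i0 (cis t) powr q)
      \<le> integral {0..2*pi} (\<lambda>t. cmod (Phid lam m k bb (cis t)) powr q)"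
  proof (rule integral_le)
    show "(\<lambda>t. pw k bb i0 (cis t) powr q) integrable_on {0..2*pi}"
      by (rule integrable_continuous_interval[OF cpw])
    show "(\<lambda>t. cmod (Phid lam m k bb (cis t)) powr q) integrable_on {0..2*pi}"
    proof (rule integrable_continuous_interval, rule continuous_on_powr')
      show "continuous_on {0..2*pi} (\<lambda>t. cmod (Phid lam m k bb (cis t)))"
        by (intro continuous_on_norm continuous_on_compose2[OF cont_Phid_disk[OF bb]] continuous_intros) auto
    qed (use q in auto)
    fix t
    have "pw k bb i0 (cis t) \<le> (\<Sum>i<m. pw k bb i (cis t))"
      using i0 by (intro member_le_sum pw_nonneg bb) auto
    also have "\<dots> = cmod (Phid lam m k bb (cis t))" using Phid_T[OF lam bb cz] by simp
    finally show "pw k bb i0 (cis t) powr q \<le> cmod (Phid lam m k bb (cis t)) powr q"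
      using q pw_nonneg[OF bb] by (intro powr_mono2) auto
  qed
  moreover have "2 powr (- q) * (if i0 < k then 1 - 1 / cmod (bb i0) else 1) powr (1 - q)
      \<le> integral {0..2*pi} (\<lambda>t. pw k bb i0 (cis t) powr q)"
  proof (cases "i0 < k")
    case True
    thus ?thesis using pois_lower_int[of "bb i0" q] bb q unfolding pw_def by simp
  next
    case False
    have "2 powr (- q) \<le> 1" using q by (simp add: powr_minus inverse_le_1_iff ge_one_powr_ge_zero)
    also have "1 \<le> 2 * pi" using pi_gt3 by simp
    finally show ?thesis using False unfolding pw_def by simp
  qed
  ultimately show ?thesis by simp
qed

lemma cont_G:
  assumes bb: "\<forall>i<k. cmod (bb i) > 1" and q: "q \<ge> 1"
  shows "continuous_on {1/2..1} (\<lambda>r. integral {0..2*pi} (\<lambda>t. cmod (Phid lam m k bb (of_real r * cis t)) powr q))"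
proof -
  have c: "continuous_on ({1/2..1} \<times> {0..2*pi}) (\<lambda>p. cmod (Phid lam m k bb (of_real (fst p) * cis (snd p))) powr q)"
  proof (rule continuous_on_powr')
    show "continuous_on ({1/2..1} \<times> {0..2*pi}) (\<lambda>p. cmod (Phid lam m k bb (of_real (fst p) * cis (snd p))))"
      by (intro continuous_on_norm continuous_on_compose2[OF cont_Phid_disk[OF bb]] continuous_intros)
         (auto simp: norm_mult)
  qed (use q in auto)
  have "continuous_on {1/2..1} (\<lambda>r. integral (cbox 0 (2*pi)) (\<lambda>t. cmod (Phid lam m k bb (of_real r * cis t)) powr q))"
    by (rule integral_continuous_on_param) (use c in \<open>simp add: case_prod_beta' cbox_interval\<close>)
  thus ?thesis by (simp add: cbox_interval)
qed

theorem lemma4p3: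
  fixes q :: real and m :: nat
  assumes "q \<ge> 1" and "m \<ge> 1"
  shows "\<exists>c C. 0 < c \<and> c \<le> C \<and>
    (\<forall>(a :: nat \<Rightarrow> nat \<Rightarrow> complex) (n :: nat) (\<zeta> :: complex).
       has_bidegree a m n \<longrightarrow>
       (\<forall>z1 z2. cmod z1 < 1 \<longrightarrow> cmod z2 < 1 \<longrightarrow> bipoly a m n z1 z2 \<noteq> 0) \<longrightarrow>
       atoral a m n \<longrightarrow>
       cmod \<zeta> = 1 \<longrightarrow>
       (\<forall>z. cmod z = 1 \<longrightarrow> reflect a m n z \<zeta> \<noteq> 0) \<longrightarrow>
       ereal (c * eps_phi a m n \<zeta> powr (1 - q))
         \<le> Hp_norm_pow (deriv (\<lambda>w. reflect a m n w \<zeta> / bipoly a m n w \<zeta>)) q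
       \<and> Hp_norm_pow (deriv (\<lambda>w. reflect a m n w \<zeta> / bipoly a m n w \<zeta>)) q
         \<le> ereal (C * eps_phi a m n \<zeta> powr (1 - q)))"
proof -
  note q = assms(1) and m1 = assms(2)
  define c where "c = 2 powr (- q) / (4 * pi)"
  define C where "C = real m powr q * real m * 2 powr (q - 1)"
  have pi3: "pi > 3" by (rule pi_gt3)
  have c0: "0 < c" unfolding c_def using pi3 by simp
  have c1: "c \<le> 1"
  proof -
    have "2 powr (- q) \<le> 1" using q by (simp add: powr_minus inverse_le_1_iff ge_one_powr_ge_zero)
    thus ?thesis unfolding c_def using pi3 by (simp add: divide_le_eq)
  qed
  have C1: "1 \<le> C"
  proof -
    have "1 \<le> real m powr q" using m1 q by (intro ge_one_powr_ge_zero) auto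
    moreover have "1 \<le> 2 powr (q - 1)" using q by (intro ge_one_powr_ge_zero) auto
    moreover have "1 \<le> real m" using m1 by simp
    ultimately show ?thesis unfolding C_def
      by (metis mult_mono' mult_1 order_trans zero_le_one)
  qed
  show ?thesis
  proof (rule exI[of _ c], rule exI[of _ C], intro conjI allI impI)
    show "0 < c" by (rule c0)
    show "c \<le> C" using c1 C1 by simp
    fix a :: "nat \<Rightarrow> nat \<Rightarrow> complex" and n :: nat and zeta :: complex
    assume nz: "\<forall>z1 z2. cmod z1 < 1 \<longrightarrow> cmod z2 < 1 \<longrightarrow> bipoly a m n z1 z2 \<noteq> 0"
      and zeta: "cmod zeta = 1" and RT: "\<forall>z. cmod z = 1 \<longrightarrow> reflect a m n z zeta \<noteq> 0"
    obtain lam k bb where lam: "cmod lam = 1" and km: "k \<le> m" and bb: "\<forall>i<k. cmod (bb i) > 1"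
      and dv: "\<And>z. cmod z \<le> 1 \<Longrightarrow> deriv (\<lambda>w. reflect a m n w zeta / bipoly a m n w zeta) z = Phid lam m k bb z"
      and epsq: "eps_phi a m n zeta = Min ((\<lambda>i. if i < k then 1 - 1 / cmod (bb i) else 1) ` {..<m})"
      using key[OF m1 nz zeta RT] by blast
    define g where "g = deriv (\<lambda>w. reflect a m n w zeta / bipoly a m n w zeta)"
    define dl where "dl i = (if i < k then 1 - 1 / cmod (bb i) else (1::real))" for i
    define eps where "eps = eps_phi a m n zeta"
    have epsM: "eps = Min (dl ` {..<m})" unfolding eps_def epsq dl_def ..
    have dl0: "dl i > 0" for i unfolding dl_def using bb by (auto simp: divide_less_eq)
    have finne: "finite (dl ` {..<m})" "dl ` {..<m} \<noteq> {}" using m1 by (auto simp: lessThan_empty_iff)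
    have eps_le: "eps \<le> dl i" if "i < m" for i unfolding epsM using finne that by (intro Min_le) auto
    obtain i0 where i0: "i0 < m" "dl i0 = eps"
      using Min_in[OF finne] unfolding epsM by auto
    have eps0: "eps > 0" using i0 dl0 by metis
    define G where "G r = integral {0..2*pi} (\<lambda>t. cmod (Phid lam m k bb (of_real r * cis t)) powr q)" for r
    have HP: "Hp_norm_pow g q = (SUP r\<in>{0<..<1::real}. ereal (1 / (2 * pi) * G r))"
    proof -
      have "integral {0..2 * pi} (\<lambda>t. cmod (g (of_real r * cis t)) powr q) = G r" if "r \<in> {0<..<1::real}" for r
        unfolding G_def g_def using that by (intro integral_cong) (simp add: dv norm_mult)
      thus ?thesis unfolding Hp_norm_pow_def by (intro SUP_cong refl) simp
    qed
    have up: "1 / (2 * pi) * G r \<le> C * eps powr (1 - q)" if r: "0 < r" "r < 1" for r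
    proof -
      have "G r \<le> real m powr q * (\<Sum>i<m. 2 * pi * (2 powr (q - 1) * dl i powr (1 - q)))"
        unfolding G_def dl_def by (rule upper_int[OF lam bb r q m1])
      also have "\<dots> \<le> real m powr q * (\<Sum>i<m. 2 * pi * (2 powr (q - 1) * eps powr (1 - q)))"
      proof (rule mult_left_mono, rule sum_mono)
        fix i assume "i \<in> {..<m}"
        hence "dl i powr (1 - q) \<le> eps powr (1 - q)" using eps_le eps0 q by (intro powr_mono2') auto
        thus "2 * pi * (2 powr (q - 1) * dl i powr (1 - q)) \<le> 2 * pi * (2 powr (q - 1) * eps powr (1 - q))"
          by (intro mult_left_mono) auto
      qed simp
      also have "\<dots> = 2 * pi * (C * eps powr (1 - q))" unfolding C_def by (simp add: mult_ac)
      finally show ?thesis by (simp add: field_simps)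
    qed
    have G1: "G 1 \<ge> 2 powr (- q) * eps powr (1 - q)"
      using lower_int1[OF lam bb q i0(1)] i0(2) unfolding G_def dl_def by simp
    have G1pos: "G 1 > 0" using G1 eps0 by (smt (verit) powr_gt_zero mult_pos_pos)
    obtain r0 where r0: "0 < r0" "r0 < 1" "G r0 \<ge> G 1 / 2"
    proof -
      have "continuous_on {1/2..1} G" unfolding G_def by (rule cont_G[OF bb q])
      then obtain d where d: "d > 0" "\<And>x. x \<in> {1/2..1} \<Longrightarrow> dist x 1 < d \<Longrightarrow> dist (G x) (G 1) < G 1 / 2"
        unfolding continuous_on_iff using G1pos by (metis atLeastAtMost_iff half_gt_zero le_numeral_extra(4) one_le_numeral divide_le_eq_1 zero_less_numeral)
      define r where "r = max (1/2) (1 - d/2)"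
      have "r \<in> {1/2..1}" "dist r 1 < d" unfolding r_def using d(1) by (auto simp: dist_real_def)
      hence "dist (G r) (G 1) < G 1 / 2" by (rule d(2))
      hence "G r \<ge> G 1 / 2" unfolding dist_real_def by linarith
      moreover have "0 < r" "r < 1" unfolding r_def using d(1) by auto
      ultimately show ?thesis using that by blast
    qed
    have low: "c * eps powr (1 - q) \<le> 1 / (2 * pi) * G r0"
    proof -
      have "c * eps powr (1 - q) = (2 powr (- q) * eps powr (1 - q)) / 2 / (2 * pi)" unfolding c_def by simp
      also have "\<dots> \<le> (G 1 / 2) / (2 * pi)" using G1 pi3 by (intro divide_right_mono) auto
      also have "\<dots> \<le> G r0 / (2 * pi)" using r0(3) pi3 by (intro divide_right_mono) auto
      finally show ?thesis by simp
    qed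
    show "ereal (c * eps_phi a m n zeta powr (1 - q)) \<le> Hp_norm_pow (deriv (\<lambda>w. reflect a m n w zeta / bipoly a m n w zeta)) q"
    proof -
      have "ereal (c * eps powr (1 - q)) \<le> ereal (1 / (2 * pi) * G r0)" using low by simp
      also have "\<dots> \<le> (SUP r\<in>{0<..<1::real}. ereal (1 / (2 * pi) * G r))"
        by (rule SUP_upper) (use r0 in auto)
      finally show ?thesis using HP unfolding g_def eps_def by simp
    qed
    show "Hp_norm_pow (deriv (\<lambda>w. reflect a m n w zeta / bipoly a m n w zeta)) q \<le> ereal (C * eps_phi a m n zeta powr (1 - q))"
    proof -
      have "(SUP r\<in>{0<..<1::real}. ereal (1 / (2 * pi) * G r)) \<le> ereal (C * eps powr (1 - q))"
        by (rule SUP_least) (use up in auto)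
      thus ?thesis using HP unfolding g_def eps_def by simp
    qed
  qed
qed


end
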